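(* Let $q=p^m$ with $p$ prime, let $\gamma$ be such that $\mathbb{F}_q=\mathbb{F}_p[\gamma]$, and let $t=\lfloor\frac{m-1}{2}\rfloor$. Let $n,k$ be integers with $4\le k\le\frac{n-1}{2}$ and $n\le p^t$, and let $h=k+1$. Let $\alpha_1,\dots,\alpha_n$ be pairwise distinct elements of $\mathbb{F}_q$ of the form $\alpha_i=\gamma^t+\sum_{j=0}^{t-1}a_{ij}\gamma^j$ with $a_{ij}\in\mathbb{F}_p$. Let $C_{h,k}$ be the linear code generated by the $k\times n$ matrix whose rows are $(\alpha_1^{e},\dots,\alpha_n^{e})$ for $e=0,1,\dots,k-2$ and $e=h$. If $p\nmid\frac{k(k+1)}{2}$, then $C_{h,k}$ is a non-GRS MDS code over $\mathbb{F}_q$.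
   Context: Convention: $0^0=1$. A linear code is MDS if its parameters $[n,k,d]$ satisfy $d=n-k+1$. For pairwise distinct $a_1,\dots,a_n\in\mathbb{F}_q$ and $w\in(\mathbb{F}_q^* )^n$, $GRS(n,k,\{a_i\},w)=\{(w_1f(a_1),\dots,w_nf(a_n)) : f\in\mathbb{F}_q[x],\ \deg f\le k-1\}$. Two codes are (monomially) equivalent if one is obtained from the other by permuting coordinates and scaling coordinates by nonzero scalars. A non-GRS MDS code is an MDS code not equivalent to any GRS code. *)

theory Defs
  imports "HOL-Computational_Algebra.Polynomial" "HOL-Library.Cardinality" "HOL-Combinatorics.Permutations"
begin

text \<open>Words of length n over a field 'a are modelled as functions nat => 'a
  that vanish outside the index set {..<n}. A code of length n is a set of such words.\<close>

definition hamming_weight :: "nat \<Rightarrow> (nat \<Rightarrow> 'a::zero) \<Rightarrow> nat" where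
  "hamming_weight n c = card {i. i < n \<and> c i \<noteq> 0}"

definition is_word :: "nat \<Rightarrow> (nat \<Rightarrow> 'a::zero) \<Rightarrow> bool" where
  "is_word n c \<longleftrightarrow> (\<forall>i\<ge>n. c i = 0)"

definition linear_code :: "nat \<Rightarrow> (nat \<Rightarrow> 'a::field) set \<Rightarrow> bool" where
  "linear_code n C \<longleftrightarrow> (\<forall>c\<in>C. is_word n c) \<and> (\<lambda>_. 0) \<in> C \<and>
     (\<forall>x\<in>C. \<forall>y\<in>C. (\<lambda>i. x i + y i) \<in> C) \<and> (\<forall>a. \<forall>x\<in>C. (\<lambda>i. a * x i) \<in> C)"

definition code_dim :: "(nat \<Rightarrow> 'a::{field,finite}) set \<Rightarrow> nat" where
  "code_dim C = (THE k. card C = CARD('a) ^ k)"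

definition min_distance :: "nat \<Rightarrow> (nat \<Rightarrow> 'a::zero) set \<Rightarrow> nat" where
  "min_distance n C = Min (hamming_weight n ` (C - {\<lambda>_. 0}))"

definition is_MDS :: "nat \<Rightarrow> (nat \<Rightarrow> 'a::{field,finite}) set \<Rightarrow> bool" where
  "is_MDS n C \<longleftrightarrow> linear_code n C \<and> min_distance n C = n - code_dim C + 1"

definition gen_code :: "nat \<Rightarrow> nat \<Rightarrow> (nat \<Rightarrow> nat \<Rightarrow> 'a::field) \<Rightarrow> (nat \<Rightarrow> 'a) set" where
  "gen_code k n G = {(\<lambda>i. if i < n then (\<Sum>r<k. u r * G r i) else 0) | u. True}"

definition GRS :: "nat \<Rightarrow> nat \<Rightarrow> (nat \<Rightarrow> 'a::field) \<Rightarrow> (nat \<Rightarrow> 'a) \<Rightarrow> (nat \<Rightarrow> 'a) set" where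
  "GRS n k a w = {(\<lambda>i. if i < n then w i * poly f (a i) else 0) | f. degree f \<le> k - 1}"

definition code_equiv :: "nat \<Rightarrow> (nat \<Rightarrow> 'a::field) set \<Rightarrow> (nat \<Rightarrow> 'a) set \<Rightarrow> bool" where
  "code_equiv n C D \<longleftrightarrow> (\<exists>\<sigma> s. \<sigma> permutes {..<n} \<and> (\<forall>i<n. s i \<noteq> 0) \<and>
     D = (\<lambda>c. (\<lambda>i. if i < n then s i * c (\<sigma> i) else 0)) ` C)"

definition is_GRS_equiv :: "nat \<Rightarrow> (nat \<Rightarrow> 'a::field) set \<Rightarrow> bool" where
  "is_GRS_equiv n C \<longleftrightarrow> (\<exists>k a w. inj_on a {..<n} \<and> (\<forall>i<n. w i \<noteq> 0) \<and>
      code_equiv n C (GRS n k a w))"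

definition non_GRS_MDS :: "nat \<Rightarrow> (nat \<Rightarrow> 'a::{field,finite}) set \<Rightarrow> bool" where
  "non_GRS_MDS n C \<longleftrightarrow> is_MDS n C \<and> \<not> is_GRS_equiv n C"

definition prime_subfield :: "'a::field set" where
  "prime_subfield = range of_nat"

definition generates_field :: "'a::field \<Rightarrow> bool" where
  "generates_field \<gamma> \<longleftrightarrow> (\<forall>x. \<exists>f. (\<forall>j. coeff f j \<in> prime_subfield) \<and> poly f \<gamma> = x)"

end

theory Submission
  imports Defs "HOL-Number_Theory.Residues"
begin

hide_const (open) UnivPoly.coeff UnivPoly.monom Module.smult

lemma char_is_p:
  assumes "prime p" and "CARD('a::{field,finite}) = p ^ m"
  shows "CHAR('a) = p" and "m \<ge> 1"
proof -
  have c0: "CHAR('a) > 0"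
    by (simp add: finite_imp_CHAR_pos)
  have pc: "prime CHAR('a)" using prime_CHAR_semidom[OF c0] .
  have "CHAR('a) dvd p ^ m" using CHAR_dvd_CARD[where 'a='a] assms(2) by simp
  then have "CHAR('a) dvd p" using pc prime_dvd_power by blast
  then show "CHAR('a) = p" using pc assms(1) by (simp add: primes_dvd_imp_eq)
  show "m \<ge> 1"
  proof (rule ccontr)
    assume "\<not> m \<ge> 1" then have "m = 0" by simp
    then have "CARD('a) = 1" using assms(2) by simp
    moreover have "(0::'a) \<noteq> 1" by simp
    then have "card {0::'a, 1} \<le> CARD('a)" by (intro card_mono) auto
    ultimately show False by simp
  qed
qed

lemma of_int_mod_char:
  assumes "CHAR('a::comm_ring_1) = p"
  shows "(of_int (z mod int p) :: 'a) = of_int z"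
proof -
  have p0: "(of_nat p :: 'a) = 0" using assms of_nat_CHAR by metis
  have "(of_int (z - z mod int p) :: 'a) = 0"
    using p0 by (simp add: minus_mod_eq_mult_div)
  then show ?thesis by simp
qed

lemma card_Fp:
  assumes "CHAR('a::comm_ring_1) = p" and "p > 0"
  shows "card (range (of_int :: int \<Rightarrow> 'a)) \<le> p"
proof -
  have "range (of_int :: int \<Rightarrow> 'a) \<subseteq> of_int ` {0..<int p}"
  proof
    fix x assume "x \<in> range (of_int :: int \<Rightarrow> 'a)"
    then obtain z where z: "x = of_int z" by auto
    have "z mod int p \<in> {0..<int p}" using assms(2) by simp
    then have "of_int (z mod int p) \<in> (of_int ` {0..<int p} :: 'a set)" by (rule imageI)
    then show "x \<in> of_int ` {0..<int p}" using of_int_mod_char[OF assms(1), of z] z by simp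
  qed
  then have "card (range (of_int :: int \<Rightarrow> 'a)) \<le> card (of_int ` {0..<int p} :: 'a set)"
    by (intro card_mono) auto
  also have "\<dots> \<le> card {0..<int p}" by (rule card_image_le) simp
  finally show ?thesis by simp
qed

lemma poly_sum_lessThan:
  fixes f :: "'a::comm_ring_1 poly"
  assumes "degree f < d"
  shows "poly f x = (\<Sum>j<d. coeff f j * x ^ j)"
proof -
  have "poly f x = (\<Sum>j\<le>degree f. coeff f j * x ^ j)" by (simp add: poly_altdef)
  also have "\<dots> = (\<Sum>j<d. coeff f j * x ^ j)"
    using assms by (intro sum.mono_neutral_left) (auto simp: coeff_eq_0)
  finally show ?thesis .
qed

lemma indep:
  fixes \<gamma> :: "'a::{field,finite}" and g :: "'a poly"
  assumes ch: "CHAR('a) = p" and pp: "prime p" and card: "CARD('a) = p ^ m"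
    and gen: "generates_field \<gamma>" and gnz: "g \<noteq> 0"
    and gc: "\<forall>j. coeff g j \<in> range of_int" and dg: "degree g < m"
  shows "poly g \<gamma> \<noteq> 0"
proof
  assume g0: "poly g \<gamma> = 0"
  define d where "d = degree g"
  define Fp where "Fp = range (of_int :: int \<Rightarrow> 'a)"
  have Fp_add: "x + y \<in> Fp" if "x \<in> Fp" "y \<in> Fp" for x y
    using that unfolding Fp_def by (metis (no_types) of_int_add rangeE rangeI)
  have Fp_diff: "x - y \<in> Fp" if "x \<in> Fp" "y \<in> Fp" for x y
    using that unfolding Fp_def by (metis (no_types) of_int_diff rangeE rangeI)
  have Fp_mult: "x * y \<in> Fp" if "x \<in> Fp" "y \<in> Fp" for x y
    using that unfolding Fp_def by (metis (no_types) of_int_mult rangeE rangeI)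
  have Fp_0: "0 \<in> Fp" unfolding Fp_def by (metis of_int_0 rangeI)
  have Fp_nat: "of_nat j \<in> Fp" for j unfolding Fp_def by (metis of_int_of_nat_eq rangeI)
  define c where "c = lead_coeff g"
  have c0: "c \<noteq> 0" using gnz by (simp add: c_def)
  obtain u where u: "c = of_int u" using gc c_def by auto
  have "\<not> int p dvd u" using c0 u ch by (simp add: of_int_eq_0_iff_char_dvd)
  then have "coprime (int p) u" using pp by (intro prime_imp_coprime) auto
  then have "coprime u (int p)" by (simp add: coprime_commute)
  then obtain v where v: "[u * v = 1] (mod int p)" using cong_solve_coprime_int by blast
  define ci where "ci = (of_int v :: 'a)"
  have "int CHAR('a) dvd u * v - 1" using v ch by (simp add: cong_iff_dvd_diff)
  then have "(of_int (u * v - 1) :: 'a) = 0"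
    by (simp only: of_int_eq_0_iff_char_dvd)
  then have cci: "c * ci = 1" using u ci_def by simp
  have ciF: "ci \<in> Fp" using ci_def Fp_def by simp
  define G where "G = smult ci g"
  have ci0: "ci \<noteq> 0" using cci by auto
  have dG: "degree G = d" using ci0 by (simp add: G_def d_def)
  have lG: "coeff G d = 1" using cci by (simp add: G_def d_def c_def mult.commute)
  have pG: "poly G \<gamma> = 0" using g0 by (simp add: G_def)
  have cG: "coeff G j \<in> Fp" for j using gc ciF Fp_mult by (simp add: G_def Fp_def)
  have dpos: "d > 0"
  proof (rule ccontr)
    assume "\<not> d > 0"
    then have "degree g = 0" using d_def by simp
    then have "poly g \<gamma> = c" by (simp add: poly_altdef c_def)
    then show False using g0 c0 by simp
  qed
  define W where "W = {poly f \<gamma> |f. (\<forall>j. coeff f j \<in> Fp) \<and> degree f < d}"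
  have allW: "(\<forall>j. coeff f j \<in> Fp) \<longrightarrow> poly f \<gamma> \<in> W" for f
  proof (induction f rule: pCons_induct)
    case 0
    show ?case using dpos unfolding W_def by (auto intro!: exI[of _ 0] simp: Fp_0)
  next
    case (pCons a f)
    show ?case
    proof
      assume cf: "\<forall>j. coeff (pCons a f) j \<in> Fp"
      then have aF: "a \<in> Fp" by (metis coeff_pCons_0)
      have "\<forall>j. coeff f j \<in> Fp" using cf by (metis coeff_pCons_Suc)
      with pCons.IH have "poly f \<gamma> \<in> W" by simp
      then obtain f' where f': "poly f \<gamma> = poly f' \<gamma>" "\<forall>j. coeff f' j \<in> Fp" "degree f' < d"
        unfolding W_def by auto
      define F0 where "F0 = pCons a f'"
      define e where "e = coeff F0 d"
      define F where "F = F0 - smult e G"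
      have cF0: "coeff F0 j \<in> Fp" for j
        using aF f'(2) by (cases j) (auto simp: F0_def)
      have eF: "e \<in> Fp" using cF0 e_def by simp
      have pF: "poly F \<gamma> = poly (pCons a f) \<gamma>"
        using f'(1) pG by (simp add: F_def F0_def)
      have cF: "coeff F j \<in> Fp" for j
        using cF0 cG eF Fp_mult Fp_diff by (simp add: F_def)
      have zF: "coeff F j = 0" if "j \<ge> d" for j
      proof (cases "j = d")
        case True then show ?thesis using lG by (simp add: F_def e_def)
      next
        case False
        then have jd: "j > d" using that by simp
        then obtain j' where j': "j = Suc j'" "j' \<ge> d" by (cases j) auto
        have "coeff F0 j = 0" using j' f'(3) by (simp add: F0_def coeff_eq_0)
        moreover have "coeff G j = 0" using jd dG by (simp add: coeff_eq_0)
        ultimately show ?thesis by (simp add: F_def)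
      qed
      have "degree F < d" using dpos zF by (intro degree_lessI) auto
      then show "poly (pCons a f) \<gamma> \<in> W" unfolding W_def using pF cF
        by (intro CollectI exI[of _ F]) simp
    qed
  qed
  have UW: "UNIV \<subseteq> W"
  proof
    fix x :: 'a
    obtain f where f: "\<forall>j. coeff f j \<in> prime_subfield" "poly f \<gamma> = x"
      using gen unfolding generates_field_def by blast
    have "\<forall>j. coeff f j \<in> Fp" using f(1) Fp_nat unfolding prime_subfield_def by (metis rangeE)
    then show "x \<in> W" using allW f(2) by blast
  qed
  have "W \<subseteq> (\<lambda>cc. \<Sum>j<d. cc j * \<gamma> ^ j) ` (PiE {..<d} (\<lambda>_. Fp))"
  proof
    fix x assume "x \<in> W"
    then obtain f where f: "x = poly f \<gamma>" "\<forall>j. coeff f j \<in> Fp" "degree f < d"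
      unfolding W_def by auto
    have "x = (\<Sum>j<d. restrict (coeff f) {..<d} j * \<gamma> ^ j)"
      using f poly_sum_lessThan by simp
    moreover have "restrict (coeff f) {..<d} \<in> PiE {..<d} (\<lambda>_. Fp)" using f(2) by auto
    ultimately show "x \<in> (\<lambda>cc. \<Sum>j<d. cc j * \<gamma> ^ j) ` (PiE {..<d} (\<lambda>_. Fp))" by blast
  qed
  then have "card W \<le> card ((\<lambda>cc. \<Sum>j<d. cc j * \<gamma> ^ j) ` (PiE {..<d} (\<lambda>_. Fp)))"
    by (intro card_mono) auto
  also have "\<dots> \<le> card (PiE {..<d} (\<lambda>_. Fp))"
    by (rule card_image_le) (auto intro: finite_PiE)
  also have "\<dots> = card Fp ^ d" by (simp add: card_PiE)
  also have "\<dots> \<le> p ^ d" using card_Fp[OF ch] pp Fp_def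
    by (simp add: power_mono prime_gt_0_nat)
  finally have "card W \<le> p ^ d" .
  moreover have "W = UNIV" using UW by blast
  ultimately have "CARD('a) \<le> p ^ d" by simp
  moreover have "p ^ d < p ^ m" using dg d_def prime_gt_1_nat[OF pp]
    by (metis power_strict_increasing_iff)
  ultimately show False using card by simp
qed

definition evz :: "'a::comm_ring_1 \<Rightarrow> int poly \<Rightarrow> 'a" where
  "evz x E = poly (map_poly of_int E) x"

lemma mp_add: "map_poly (of_int :: int \<Rightarrow> 'a::comm_ring_1) (p + q) = map_poly of_int p + map_poly of_int q"
  by (rule poly_eqI) (simp add: coeff_map_poly)

lemma mp_diff: "map_poly (of_int :: int \<Rightarrow> 'a::comm_ring_1) (p - q) = map_poly of_int p - map_poly of_int q"
  by (rule poly_eqI) (simp add: coeff_map_poly)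

lemma mp_mult: "map_poly (of_int :: int \<Rightarrow> 'a::comm_ring_1) (p * q) = map_poly of_int p * map_poly of_int q"
  by (rule poly_eqI) (simp add: coeff_map_poly coeff_mult)

lemma evz_add: "evz x (p + q) = evz x p + evz x q"
  by (simp add: evz_def mp_add)
lemma evz_diff: "evz x (p - q) = evz x p - evz x q"
  by (simp add: evz_def mp_diff)
lemma evz_mult: "evz x (p * q) = evz x p * evz x q"
  by (simp add: evz_def mp_mult)
lemma evz_0: "evz x 0 = 0"
  by (simp add: evz_def)
lemma evz_monom: "evz x (monom c j) = of_int c * x ^ j"
  by (simp add: evz_def map_poly_monom poly_monom)

lemma coeff_mult_le:
  fixes p q :: "'a::comm_ring_1 poly"
  assumes "degree p \<le> a" "degree q \<le> b"
  shows "coeff (p * q) (a + b) = coeff p a * coeff q b"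
proof (cases "degree p = a \<and> degree q = b")
  case True
  then show ?thesis using coeff_mult_degree_sum[of p q] by simp
next
  case False
  then have lt: "degree p < a \<or> degree q < b" using assms by auto
  then have "coeff p a * coeff q b = 0" by (auto simp: coeff_eq_0)
  moreover have "degree (p * q) < a + b"
    using degree_mult_le[of p q] assms lt by linarith
  then have "coeff (p * q) (a + b) = 0" by (simp add: coeff_eq_0)
  ultimately show ?thesis by simp
qed

lemma coeff_lin_mult_Suc:
  fixes X :: "'a::comm_ring_1 poly"
  shows "coeff ([:c, 1:] * X) (Suc j) = c * coeff X (Suc j) + coeff X j"
  by simp

lemma prod_coeffs:
  fixes \<beta> :: "nat \<Rightarrow> 'a::comm_ring_1" and A :: "nat \<Rightarrow> int poly"
  assumes "finite S"
    and "\<forall>i\<in>S. \<beta> i = evz \<gamma> (A i) \<and> degree (A i) \<le> t \<and> coeff (A i) t = 1"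
  shows "\<exists>E B. degree ([:0,0,1:] * (\<Prod>i\<in>S. [:-\<beta> i,1:])) \<le> card S + 2
     \<and> coeff ([:0,0,1:] * (\<Prod>i\<in>S. [:-\<beta> i,1:])) (card S + 2) = 1
     \<and> coeff ([:0,0,1:] * (\<Prod>i\<in>S. [:-\<beta> i,1:])) (card S + 1) = evz \<gamma> E
     \<and> coeff ([:0,0,1:] * (\<Prod>i\<in>S. [:-\<beta> i,1:])) (card S) = evz \<gamma> B
     \<and> degree E \<le> t \<and> coeff E t = - int (card S)
     \<and> degree B \<le> 2 * t \<and> 2 * coeff B (2 * t) = int (card S) * (int (card S) - 1)"
  using assms
proof (induction S rule: finite_induct)
  case empty
  show ?case by (intro exI[of _ 0]) (simp add: evz_0)
next
  case (insert x F)
  from insert.IH insert.prems obtain E B where IH: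
    "degree ([:0,0,1:] * (\<Prod>i\<in>F. [:-\<beta> i,1:])) \<le> card F + 2"
    "coeff ([:0,0,1:] * (\<Prod>i\<in>F. [:-\<beta> i,1:])) (card F + 2) = 1"
    "coeff ([:0,0,1:] * (\<Prod>i\<in>F. [:-\<beta> i,1:])) (card F + 1) = evz \<gamma> E"
    "coeff ([:0,0,1:] * (\<Prod>i\<in>F. [:-\<beta> i,1:])) (card F) = evz \<gamma> B"
    "degree E \<le> t" "coeff E t = - int (card F)"
    "degree B \<le> 2 * t" "2 * coeff B (2 * t) = int (card F) * (int (card F) - 1)"
    by auto
  define X where "X = [:0,0,1:] * (\<Prod>i\<in>F. [:-\<beta> i,1:])"
  define s where "s = card F"
  have Ax: "\<beta> x = evz \<gamma> (A x)" "degree (A x) \<le> t" "coeff (A x) t = 1" using insert.prems by auto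
  have X': "[:0,0,1:] * (\<Prod>i\<in>insert x F. [:-\<beta> i,1:]) = [:-\<beta> x, 1:] * X"
    using insert.hyps by (simp add: X_def mult.left_commute)
  have cs: "card (insert x F) = s + 1" using insert.hyps s_def by simp
  have dX: "degree X \<le> s + 2" using IH(1) X_def s_def by simp
  have "degree ([:-\<beta> x, 1:] * X) \<le> degree [:-\<beta> x, 1:] + degree X" by (rule degree_mult_le)
  also have "\<dots> \<le> 1 + (s + 2)" using dX by simp
  finally have d1: "degree ([:-\<beta> x, 1:] * X) \<le> s + 1 + 2" by simp
  have "coeff X (Suc (s + 2)) = 0" using dX by (simp add: coeff_eq_0)
  then have c1: "coeff ([:-\<beta> x, 1:] * X) (s + 1 + 2) = 1"
    using IH(2) X_def s_def coeff_lin_mult_Suc[of "-\<beta> x" X "s + 2"] by simp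
  have c2: "coeff ([:-\<beta> x, 1:] * X) (s + 1 + 1) = evz \<gamma> (E - A x)"
    using IH(2,3) X_def s_def coeff_lin_mult_Suc[of "-\<beta> x" X "s + 1"] Ax(1)
    by (simp add: evz_diff)
  have c3: "coeff ([:-\<beta> x, 1:] * X) (s + 1) = evz \<gamma> (B - A x * E)"
    using IH(3,4) X_def s_def coeff_lin_mult_Suc[of "-\<beta> x" X "s"] Ax(1)
    by (simp add: evz_diff evz_mult)
  have dE: "degree (E - A x) \<le> t" using IH(5) Ax(2) degree_diff_le by blast
  have cE: "coeff (E - A x) t = - int (s + 1)" using IH(6) Ax(3) s_def by simp
  have "degree (A x * E) \<le> 2 * t" using degree_mult_le[of "A x" E] IH(5) Ax(2) by linarith
  then have dB: "degree (B - A x * E) \<le> 2 * t" using IH(7) degree_diff_le by blast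
  have "coeff (A x * E) (t + t) = coeff (A x) t * coeff E t"
    by (rule coeff_mult_le) (use Ax(2) IH(5) in auto)
  then have "coeff (A x * E) (2 * t) = - int s" using Ax(3) IH(6) s_def by (simp add: mult_2)
  then have cB: "2 * coeff (B - A x * E) (2 * t) = int (s + 1) * (int (s + 1) - 1)"
    using IH(8) s_def by (simp add: algebra_simps)
  show ?case unfolding X' cs
    by (intro exI[of _ "E - A x"] exI[of _ "B - A x * E"]) (use d1 c1 c2 c3 dE cE dB cB in simp)
qed

lemma evz_sum: "evz x (\<Sum>j\<in>J. f j) = (\<Sum>j\<in>J. evz x (f j))"
  by (induction J rule: infinite_finite_induct) (auto simp: evz_0 evz_add)

lemma alpha_int_poly:
  fixes \<gamma> :: "'a::field"
  assumes "\<forall>j<t. a j \<in> prime_subfield" and "y = \<gamma> ^ t + (\<Sum>j<t. a j * \<gamma> ^ j)"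
  shows "\<exists>Ai. y = evz \<gamma> Ai \<and> degree Ai \<le> t \<and> coeff Ai t = 1"
proof -
  have "\<forall>j. \<exists>z. j < t \<longrightarrow> a j = of_nat z" using assms(1) unfolding prime_subfield_def by auto
  then obtain nn where nn: "\<forall>j<t. a j = of_nat (nn j)" by (metis choice)
  define Ai where "Ai = monom 1 t + (\<Sum>j<t. monom (int (nn j)) j)"
  have "evz \<gamma> Ai = \<gamma> ^ t + (\<Sum>j<t. of_int (int (nn j)) * \<gamma> ^ j)"
    by (simp add: Ai_def evz_add evz_sum evz_monom)
  also have "\<dots> = y" using assms(2) nn by simp
  finally have e: "y = evz \<gamma> Ai" by simp
  have "degree (\<Sum>j<t. monom (int (nn j)) j) \<le> t"
    by (intro degree_sum_le) (auto intro: order_trans[OF degree_monom_le])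
  then have d: "degree Ai \<le> t" unfolding Ai_def
    by (meson degree_add_le degree_monom_le)
  have c: "coeff Ai t = 1" by (simp add: Ai_def coeff_sum)
  show ?thesis using e d c by blast
qed

lemma r_nonzero:
  fixes \<gamma> :: "'a::{field,finite}" and \<alpha> :: "nat \<Rightarrow> 'a"
  assumes ch: "CHAR('a) = p" and pp: "prime p" and card: "CARD('a) = p ^ m"
    and gen: "generates_field \<gamma>" and tdef: "t = (m - 1) div 2" and m1: "m \<ge> 1"
    and h\<alpha>: "\<forall>i<n. \<exists>a :: nat \<Rightarrow> 'a. (\<forall>j<t. a j \<in> prime_subfield) \<and>
            \<alpha> i = \<gamma> ^ t + (\<Sum>j<t. a j * \<gamma> ^ j)"
    and ndvd: "\<not> p dvd (k * (k + 1) div 2)"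
    and S: "S \<subseteq> {..<n}" "card S = k"
  shows "(coeff ([:0,0,1:] * (\<Prod>i\<in>S. [:-\<alpha> i,1:])) (k + 1)) ^ 2
         \<noteq> coeff ([:0,0,1:] * (\<Prod>i\<in>S. [:-\<alpha> i,1:])) k"
proof
  assume eq: "(coeff ([:0,0,1:] * (\<Prod>i\<in>S. [:-\<alpha> i,1:])) (k + 1)) ^ 2
         = coeff ([:0,0,1:] * (\<Prod>i\<in>S. [:-\<alpha> i,1:])) k"
  have "\<forall>i. \<exists>Ai. i < n \<longrightarrow> \<alpha> i = evz \<gamma> Ai \<and> degree Ai \<le> t \<and> coeff Ai t = 1"
  proof (intro allI)
    fix i
    show "\<exists>Ai. i < n \<longrightarrow> \<alpha> i = evz \<gamma> Ai \<and> degree Ai \<le> t \<and> coeff Ai t = 1"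
    proof (cases "i < n")
      case True
      then obtain a :: "nat \<Rightarrow> 'a" where "\<forall>j<t. a j \<in> prime_subfield" "\<alpha> i = \<gamma> ^ t + (\<Sum>j<t. a j * \<gamma> ^ j)"
        using h\<alpha> by blast
      then show ?thesis using alpha_int_poly by blast
    qed simp
  qed
  then obtain A where A: "\<forall>i<n. \<alpha> i = evz \<gamma> (A i) \<and> degree (A i) \<le> t \<and> coeff (A i) t = 1"
    by (metis choice)
  have fS: "finite S" using S(1) finite_subset by blast
  obtain E B where EB:
     "coeff ([:0,0,1:] * (\<Prod>i\<in>S. [:-\<alpha> i,1:])) (card S + 1) = evz \<gamma> E"
     "coeff ([:0,0,1:] * (\<Prod>i\<in>S. [:-\<alpha> i,1:])) (card S) = evz \<gamma> B"
     "degree E \<le> t" "coeff E t = - int (card S)"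
     "degree B \<le> 2 * t" "2 * coeff B (2 * t) = int (card S) * (int (card S) - 1)"
    using prod_coeffs[OF fS, of \<alpha> \<gamma> A t] A S(1) by blast
  define H where "H = E * E - B"
  have evH: "evz \<gamma> H = 0" using eq EB(1,2) S(2) by (simp add: H_def evz_diff evz_mult power2_eq_square)
  have "coeff (E * E) (t + t) = coeff E t * coeff E t"
    by (rule coeff_mult_le) (use EB(3) in auto)
  then have cEE: "coeff (E * E) (2 * t) = int k * int k" using EB(4) S(2) by (simp add: mult_2)
  have "2 * coeff H (2 * t) = int k * (int k + 1)"
    using cEE EB(6) S(2) by (simp add: H_def algebra_simps)
  moreover have "2 * int (k * (k + 1) div 2) = int k * (int k + 1)"
  proof -
    have "even (k * (k + 1))" by simp
    then have "2 * (k * (k + 1) div 2) = k * (k + 1)" by simp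
    then show ?thesis by (metis of_nat_mult of_nat_add of_nat_1 of_nat_numeral)
  qed
  ultimately have cH: "coeff H (2 * t) = int (k * (k + 1) div 2)" by simp
  have nz: "(of_int (coeff H (2 * t)) :: 'a) \<noteq> 0"
    using cH ndvd ch by (simp only: of_int_of_nat_eq of_nat_eq_0_iff_char_dvd) simp
  define g where "g = (map_poly of_int H :: 'a poly)"
  have cg: "coeff g (2 * t) \<noteq> 0" using nz by (simp add: g_def coeff_map_poly)
  then have gnz: "g \<noteq> 0" by auto
  have "degree E * 2 \<le> 2 * t" using EB(3) by simp
  have "degree (E * E) \<le> 2 * t" using degree_mult_le[of E E] EB(3) by linarith
  then have "degree H \<le> 2 * t" using EB(5) degree_diff_le by (simp add: H_def)
  then have "degree g \<le> 2 * t" unfolding g_def by (meson map_poly_degree_leq order_trans)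
  moreover have "2 * t < m" using tdef m1 by simp
  ultimately have dg: "degree g < m" by simp
  have gc: "\<forall>j. coeff g j \<in> range of_int" by (simp add: g_def coeff_map_poly)
  have "poly g \<gamma> \<noteq> 0" by (rule indep[OF ch pp card gen gnz gc dg])
  then show False using evH by (simp add: evz_def g_def)
qed

lemma prod_dvd_roots:
  fixes f :: "'a::idom poly"
  assumes "finite S" "inj_on \<alpha> S" "\<forall>i\<in>S. poly f (\<alpha> i) = 0"
  shows "(\<Prod>i\<in>S. [:-\<alpha> i, 1:]) dvd f"
  using assms
proof (induction S arbitrary: f rule: finite_induct)
  case empty
  then show ?case by simp
next
  case (insert x F)
  have "poly f (\<alpha> x) = 0" using insert.prems by simp
  then obtain g where g: "f = [:-\<alpha> x, 1:] * g" using poly_eq_0_iff_dvd by (metis dvdE)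
  have "\<forall>i\<in>F. poly g (\<alpha> i) = 0"
  proof
    fix i assume i: "i \<in> F"
    have "\<alpha> i \<noteq> \<alpha> x" using insert.prems(1) insert.hyps(2) i by (auto simp: inj_on_def)
    moreover have "poly f (\<alpha> i) = 0" using insert.prems(2) i by simp
    ultimately show "poly g (\<alpha> i) = 0" using g by simp
  qed
  then have "(\<Prod>i\<in>F. [:-\<alpha> i, 1:]) dvd g" using insert.IH insert.prems(1) by (simp add: inj_on_insert)
  then have "[:-\<alpha> x, 1:] * (\<Prod>i\<in>F. [:-\<alpha> i, 1:]) dvd [:-\<alpha> x, 1:] * g"
    by (rule mult_dvd_mono[OF dvd_refl])
  moreover have "(\<Prod>i\<in>insert x F. [:-\<alpha> i, 1:]) = [:-\<alpha> x, 1:] * (\<Prod>i\<in>F. [:-\<alpha> i, 1:])"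
    by (rule prod.insert) (use insert.hyps in auto)
  ultimately show ?case using g by simp
qed

definition ex :: "nat \<Rightarrow> nat \<Rightarrow> nat" where
  "ex k r = (if r \<le> k - 2 then r else k + 1)"

definition fpoly :: "nat \<Rightarrow> (nat \<Rightarrow> 'a::comm_ring_1) \<Rightarrow> 'a poly" where
  "fpoly k u = (\<Sum>r<k. monom (u r) (ex k r))"

lemma fpoly_split:
  assumes "k \<ge> 2"
  shows "fpoly k u = (\<Sum>r<k-1. monom (u r) r) + monom (u (k - 1)) (k + 1)"
proof -
  have k: "k = Suc (k - 1)" using assms by simp
  have "fpoly k u = (\<Sum>r<Suc (k-1). monom (u r) (ex k r))" using k by (simp add: fpoly_def)
  also have "\<dots> = (\<Sum>r<k-1. monom (u r) (ex k r)) + monom (u (k - 1)) (ex k (k - 1))"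
    by simp
  also have "(\<Sum>r<k-1. monom (u r) (ex k r)) = (\<Sum>r<k-1. monom (u r) r)"
    by (intro sum.cong) (auto simp: ex_def)
  also have "ex k (k - 1) = k + 1" using assms by (simp add: ex_def)
  finally show ?thesis .
qed

lemma coeff_fpoly:
  assumes "k \<ge> 2"
  shows "coeff (fpoly k u) j = (if j \<le> k - 2 then u j else if j = k + 1 then u (k - 1) else 0)"
  using assms by (auto simp: fpoly_split coeff_sum coeff_monom)

lemma poly_fpoly: "poly (fpoly k u) x = (\<Sum>r<k. u r * x ^ ex k r)"
  by (simp add: fpoly_def poly_sum poly_monom)

lemma key_K:
  fixes \<alpha> :: "nat \<Rightarrow> 'a::field"
  assumes k2: "k \<ge> 2" and fS: "finite S" and cS: "card S = k" and inj: "inj_on \<alpha> S"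
    and r: "(coeff ([:0,0,1:] * (\<Prod>i\<in>S. [:-\<alpha> i,1:])) (k + 1)) ^ 2
         \<noteq> coeff ([:0,0,1:] * (\<Prod>i\<in>S. [:-\<alpha> i,1:])) k"
    and z: "\<forall>i\<in>S. poly (fpoly k u) (\<alpha> i) = 0"
  shows "\<forall>r<k. u r = 0"
proof -
  define f where "f = fpoly k u"
  define P where "P = (\<Prod>i\<in>S. [:-\<alpha> i,1:])"
  define X where "X = [:0,0,1:] * P"
  have Pdvd: "P dvd f" unfolding P_def f_def using prod_dvd_roots[OF fS inj] z by blast
  have cf: "coeff f j = (if j \<le> k - 2 then u j else if j = k + 1 then u (k - 1) else 0)" for j
    unfolding f_def by (rule coeff_fpoly[OF k2])
  have card_img: "card (\<alpha> ` S) = k" using inj cS by (simp add: card_image)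
  have roots: "\<alpha> ` S \<subseteq> {x. poly f x = 0}" using z f_def by auto
  show ?thesis
  proof (cases "u (k - 1) = 0")
    case True
    have f0: "f = 0"
    proof (rule ccontr)
      assume fnz: "f \<noteq> 0"
      have "degree f \<le> k - 2"
        by (rule degree_le) (use True cf in auto)
      moreover have "card (\<alpha> ` S) \<le> card {x. poly f x = 0}"
        using roots poly_roots_finite[OF fnz] by (intro card_mono) auto
      moreover have "card {x. poly f x = 0} \<le> degree f" using card_poly_roots_bound[OF fnz] .
      ultimately show False using card_img k2 by linarith
    qed
    show ?thesis
    proof (intro allI impI)
      fix r assume "r < k"
      show "u r = 0"
      proof (cases "r \<le> k - 2")
        case True then show ?thesis using cf[of r] f0 by simp
      next
        case False then have "r = k - 1" using \<open>r < k\<close> by simp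
        then show ?thesis using \<open>u (k - 1) = 0\<close> by simp
      qed
    qed
  next
    case False
    have "\<not> (k + 1 \<le> k - 2)" by simp
    then have cfk: "coeff f (k + 1) = u (k - 1)" using cf[of "k + 1"] by presburger
    then have fnz: "f \<noteq> 0" using False by auto
    have df: "degree f = k + 1"
    proof (rule antisym)
      show "degree f \<le> k + 1" by (rule degree_le) (use cf in auto)
      show "k + 1 \<le> degree f" by (rule le_degree) (use cfk False in simp)
    qed
    obtain Q where Q: "f = P * Q" using Pdvd by (metis dvdE)
    have Pnz: "P \<noteq> 0" unfolding P_def by (simp add: fS)
    have dP: "degree P = k" unfolding P_def using cS
      by (subst degree_prod_sum_eq) auto
    have lP: "lead_coeff P = 1" unfolding P_def by (simp add: lead_coeff_prod)
    have x2: "[:0,0,1:] * f = X * Q" by (simp add: X_def Q mult.assoc)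
    have Qnz: "Q \<noteq> 0" using Q fnz by auto
    have "degree f = degree P + degree Q" using Q Pnz Qnz by (simp add: degree_mult_eq)
    then have dQ: "degree Q = 1" using df dP by simp
    define q0 where "q0 = coeff Q 0"
    define q1 where "q1 = coeff Q 1"
    have q1nz: "q1 \<noteq> 0" using dQ Qnz q1_def by (metis leading_coeff_0_iff)
    have Qeq: "Q = [:q0, q1:]"
      by (rule poly_eqI) (auto simp: q0_def q1_def coeff_pCons coeff_eq_0 dQ split: nat.split)
    have XQ: "X * Q = smult q0 X + pCons 0 (smult q1 X)" by (simp add: Qeq)
    have dX: "degree X = k + 2" unfolding X_def using Pnz dP by (simp add: degree_mult_eq)
    have "coeff X (k + 2) = lead_coeff X" using dX by simp
    also have "lead_coeff X = lead_coeff [:0,0,1::'a:] * lead_coeff P" by (simp add: X_def lead_coeff_mult)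
    also have "\<dots> = 1" using lP by simp
    finally have cX: "coeff X (k + 2) = 1" .
    have e1: "coeff ([:0,0,1:] * f) (Suc (k + 1)) = coeff f k" by simp
    obtain k' where k': "k = Suc k'" using k2 by (cases k) auto
    have e2: "coeff ([:0,0,1:] * f) (Suc k) = coeff f (k - 1)" using k' by simp
    have EQ: "[:0,0,1:] * f = smult q0 X + pCons 0 (smult q1 X)" using x2 XQ by simp
    have cEQ: "coeff ([:0,0,1:] * f) j = q0 * coeff X j + (case j of 0 \<Rightarrow> 0 | Suc j' \<Rightarrow> q1 * coeff X j')" for j
      by (simp only: EQ) (simp add: coeff_pCons split: nat.split)
    have "coeff f k = 0" using cf[of k] k2 by simp
    then have eqa: "q0 * coeff X (Suc (k + 1)) + q1 * coeff X (k + 1) = 0"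
      using e1 cEQ[of "Suc (k + 1)"] by simp
    have "\<not> (k - 1 \<le> k - 2)" "k - 1 \<noteq> k + 1" using k2 by auto
    then have "coeff f (k - 1) = 0" using cf[of "k - 1"] by presburger
    then have eqb: "q0 * coeff X (k + 1) + q1 * coeff X k = 0"
      using e2 cEQ[of "Suc k"] by simp
    have "coeff X (Suc (k + 1)) = 1" using cX by simp
    then have "q0 = - q1 * coeff X (k + 1)" using eqa by (simp add: algebra_simps eq_neg_iff_add_eq_0)
    then have "q1 * (coeff X k - (coeff X (k + 1)) ^ 2) = 0" using eqb
      by (simp add: algebra_simps power2_eq_square)
    then have "coeff X k = (coeff X (k + 1)) ^ 2" using q1nz by simp
    then show ?thesis using r X_def P_def by simp
  qed
qed

lemma card_PiE_UNIV: "card (PiE {..<N} (\<lambda>_. UNIV :: 'a::finite set)) = CARD('a) ^ N"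
  by (simp add: card_PiE)

lemma poly_inj_PiE:
  fixes a w :: "nat \<Rightarrow> 'a::field"
  assumes inj: "inj_on a {..<n}" and N: "N \<le> n" and w: "\<forall>i<n. w i \<noteq> 0"
  shows "inj_on (\<lambda>c. (\<lambda>i. if i < n then w i * (\<Sum>j<N. c j * a i ^ j) else 0)) (PiE {..<N} (\<lambda>_. UNIV))"
proof
  fix c c' assume c: "c \<in> PiE {..<N} (\<lambda>_. UNIV)" and c': "c' \<in> PiE {..<N} (\<lambda>_. UNIV)"
    and eq: "(\<lambda>i. if i < n then w i * (\<Sum>j<N. c j * a i ^ j) else 0) = (\<lambda>i. if i < n then w i * (\<Sum>j<N. c' j * a i ^ j) else 0)"
  define D where "D = (\<Sum>j<N. monom (c j - c' j) j)"
  have pD: "poly D x = (\<Sum>j<N. c j * x ^ j) - (\<Sum>j<N. c' j * x ^ j)" for x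
    by (simp add: D_def poly_sum poly_monom sum_subtractf algebra_simps)
  have roots: "poly D (a i) = 0" if "i < n" for i
  proof -
    have "w i * (\<Sum>j<N. c j * a i ^ j) = w i * (\<Sum>j<N. c' j * a i ^ j)"
      using fun_cong[OF eq, of i] that by simp
    then show ?thesis using w that pD by simp
  qed
  have D0: "D = 0"
  proof (rule ccontr)
    assume Dnz: "D \<noteq> 0"
    have "degree D < N" unfolding D_def
    proof -
      have "N > 0" using Dnz D_def by (cases N) auto
      moreover have "degree (\<Sum>j<N. monom (c j - c' j) j) \<le> N - 1"
        by (intro degree_sum_le) (auto intro: order_trans[OF degree_monom_le])
      ultimately show "degree (\<Sum>j<N. monom (c j - c' j) j) < N" by linarith
    qed
    moreover have "card (a ` {..<n}) \<le> card {x. poly D x = 0}"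
      using roots poly_roots_finite[OF Dnz] by (intro card_mono) auto
    moreover have "card (a ` {..<n}) = n" using inj by (simp add: card_image)
    moreover have "card {x. poly D x = 0} \<le> degree D" using card_poly_roots_bound[OF Dnz] .
    ultimately show False using N by linarith
  qed
  show "c = c'"
  proof (rule PiE_ext[OF c c'])
    fix j assume j: "j \<in> {..<N}"
    have "coeff D j = c j - c' j" using j by (simp add: D_def coeff_sum coeff_monom)
    then show "c j = c' j" using D0 by simp
  qed
qed

lemma card_poly_image:
  fixes a w :: "nat \<Rightarrow> 'a::{field,finite}"
  assumes inj: "inj_on a {..<n}" and N: "N \<le> n" and w: "\<forall>i<n. w i \<noteq> 0"
  shows "card ((\<lambda>c. (\<lambda>i. if i < n then w i * (\<Sum>j<N. c j * a i ^ j) else 0)) ` (PiE {..<N} (\<lambda>_. UNIV))) = CARD('a) ^ N"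
  using card_image[OF poly_inj_PiE[OF assms]] card_PiE_UNIV by simp

lemma card_gt1: "CARD('a::{field,finite}) > 1"
proof -
  have "card {0::'a, 1} \<le> CARD('a)" by (intro card_mono) auto
  then show ?thesis by simp
qed

definition cwd :: "nat \<Rightarrow> nat \<Rightarrow> (nat \<Rightarrow> 'a::field) \<Rightarrow> (nat \<Rightarrow> 'a) \<Rightarrow> (nat \<Rightarrow> 'a)" where
  "cwd n k \<alpha> u = (\<lambda>i. if i < n then (\<Sum>r<k. u r * \<alpha> i ^ ex k r) else 0)"

lemma cwd_diff: "cwd n k \<alpha> (\<lambda>r. u r - v r) = (\<lambda>i. cwd n k \<alpha> u i - cwd n k \<alpha> v i)"
  by (auto simp: cwd_def sum_subtractf algebra_simps)

lemma cwd_add: "cwd n k \<alpha> (\<lambda>r. u r + v r) = (\<lambda>i. cwd n k \<alpha> u i + cwd n k \<alpha> v i)"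
  by (auto simp: cwd_def sum.distrib algebra_simps)

lemma cwd_scale: "cwd n k \<alpha> (\<lambda>r. a * u r) = (\<lambda>i. a * cwd n k \<alpha> u i)"
  by (auto simp: cwd_def sum_distrib_left algebra_simps)

lemma cwd_restrict: "cwd n k \<alpha> (restrict u {..<k}) = cwd n k \<alpha> u"
  by (auto simp: cwd_def intro!: sum.cong)

lemma cwd_zero: "cwd n k \<alpha> (\<lambda>_. 0) = (\<lambda>_. 0)"
  by (auto simp: cwd_def)

context
  fixes n k :: nat and \<alpha> :: "nat \<Rightarrow> 'a::{field,finite}"
  assumes k4: "4 \<le> k" and nk: "2 * k \<le> n - 1" and inj: "inj_on \<alpha> {..<n}"
    and rc: "\<And>S. S \<subseteq> {..<n} \<Longrightarrow> card S = k \<Longrightarrow>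
      (coeff ([:0,0,1:] * (\<Prod>i\<in>S. [:-\<alpha> i,1:])) (k + 1)) ^ 2 \<noteq> coeff ([:0,0,1:] * (\<Prod>i\<in>S. [:-\<alpha> i,1:])) k"
begin

lemma zeros_bound:
  assumes nz: "\<exists>r<k. u r \<noteq> 0"
  shows "card {i. i < n \<and> cwd n k \<alpha> u i = 0} \<le> k - 1"
proof (rule ccontr)
  assume "\<not> card {i. i < n \<and> cwd n k \<alpha> u i = 0} \<le> k - 1"
  then have "k \<le> card {i. i < n \<and> cwd n k \<alpha> u i = 0}" by simp
  then obtain S where S: "S \<subseteq> {i. i < n \<and> cwd n k \<alpha> u i = 0}" "card S = k" "finite S"
    by (rule obtain_subset_with_card_n)
  have Sn: "S \<subseteq> {..<n}" using S(1) by auto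
  have injS: "inj_on \<alpha> S" using inj Sn by (rule inj_on_subset)
  have z: "\<forall>i\<in>S. poly (fpoly k u) (\<alpha> i) = 0" using S(1) by (auto simp: cwd_def poly_fpoly)
  have "\<forall>r<k. u r = 0"
    by (rule key_K[OF _ S(3) S(2) injS rc[OF Sn S(2)] z]) (use k4 in simp)
  then show False using nz by blast
qed

lemma cwd_nonzero:
  assumes "cwd n k \<alpha> u \<noteq> (\<lambda>_. 0)"
  shows "\<exists>r<k. u r \<noteq> 0"
proof (rule ccontr)
  assume "\<not> (\<exists>r<k. u r \<noteq> 0)"
  then have "cwd n k \<alpha> u = (\<lambda>_. 0)" by (auto simp: cwd_def)
  then show False using assms by simp
qed

lemma cwd_inj: "inj_on (cwd n k \<alpha>) (PiE {..<k} (\<lambda>_. UNIV))"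
proof
  fix c c' assume c: "c \<in> PiE {..<k} (\<lambda>_. UNIV)" and c': "c' \<in> PiE {..<k} (\<lambda>_. UNIV)"
    and eq: "cwd n k \<alpha> c = cwd n k \<alpha> c'"
  have w0: "cwd n k \<alpha> (\<lambda>r. c r - c' r) = (\<lambda>_. 0)" using eq by (simp add: cwd_diff)
  have "\<forall>r<k. c r - c' r = 0"
  proof (rule ccontr)
    assume "\<not> (\<forall>r<k. c r - c' r = 0)"
    then have "card {i. i < n \<and> cwd n k \<alpha> (\<lambda>r. c r - c' r) i = 0} \<le> k - 1"
      by (intro zeros_bound) auto
    moreover have "{i. i < n \<and> cwd n k \<alpha> (\<lambda>r. c r - c' r) i = 0} = {..<n}" using w0 by auto
    ultimately show False using nk k4 by simp
  qed
  then show "c = c'" using c c' by (intro PiE_ext) auto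
qed

lemma C_eq: "range (cwd n k \<alpha>) = cwd n k \<alpha> ` PiE {..<k} (\<lambda>_. UNIV)"
proof
  show "range (cwd n k \<alpha>) \<subseteq> cwd n k \<alpha> ` PiE {..<k} (\<lambda>_. UNIV)"
  proof
    fix x assume "x \<in> range (cwd n k \<alpha>)"
    then obtain u where "x = cwd n k \<alpha> u" by auto
    then have "x = cwd n k \<alpha> (restrict u {..<k})" by (simp add: cwd_restrict)
    moreover have "restrict u {..<k} \<in> PiE {..<k} (\<lambda>_. UNIV)" by simp
    ultimately show "x \<in> cwd n k \<alpha> ` PiE {..<k} (\<lambda>_. UNIV)" by blast
  qed
qed auto

lemma card_C: "card (range (cwd n k \<alpha>)) = CARD('a) ^ k"
  using C_eq card_image[OF cwd_inj] card_PiE_UNIV by simp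

lemma finite_C: "finite (range (cwd n k \<alpha>))"
proof -
  have "finite (PiE {..<k} (\<lambda>_. UNIV :: 'a set))" by (rule finite_PiE) auto
  then show ?thesis using C_eq by simp
qed

lemma weight_ge:
  assumes "c \<in> range (cwd n k \<alpha>)" "c \<noteq> (\<lambda>_. 0)"
  shows "hamming_weight n c \<ge> n - k + 1"
proof -
  obtain u where u: "c = cwd n k \<alpha> u" using assms(1) by auto
  have "\<exists>r<k. u r \<noteq> 0" using cwd_nonzero assms(2) u by blast
  then have zb: "card {i. i < n \<and> c i = 0} \<le> k - 1" using zeros_bound u by blast
  have "{i. i < n \<and> c i \<noteq> 0} = {..<n} - {i. i < n \<and> c i = 0}" by auto
  then have "card {i. i < n \<and> c i \<noteq> 0} = n - card {i. i < n \<and> c i = 0}"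
    by (simp add: card_Diff_subset subset_eq)
  then show ?thesis using zb nk k4 unfolding hamming_weight_def by linarith
qed

lemma linear_C: "linear_code n (range (cwd n k \<alpha>))"
  unfolding linear_code_def
proof (intro conjI ballI allI)
  fix c assume "c \<in> range (cwd n k \<alpha>)"
  then show "is_word n c" by (auto simp: is_word_def cwd_def)
next
  show "(\<lambda>_. 0) \<in> range (cwd n k \<alpha>)"
  proof (rule image_eqI)
    show "(\<lambda>_. 0) = cwd n k \<alpha> (\<lambda>_. 0)" by (simp add: cwd_zero)
  qed simp
next
  fix x y assume "x \<in> range (cwd n k \<alpha>)" "y \<in> range (cwd n k \<alpha>)"
  then obtain u v where "x = cwd n k \<alpha> u" "y = cwd n k \<alpha> v" by auto
  then have "(\<lambda>i. x i + y i) = cwd n k \<alpha> (\<lambda>r. u r + v r)" by (simp add: cwd_add)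
  then show "(\<lambda>i. x i + y i) \<in> range (cwd n k \<alpha>)"
    by (metis rangeI)
next
  fix a x assume "x \<in> range (cwd n k \<alpha>)"
  then obtain u where "x = cwd n k \<alpha> u" by auto
  then have "(\<lambda>i. a * x i) = cwd n k \<alpha> (\<lambda>r. a * u r)" by (simp add: cwd_scale)
  then show "(\<lambda>i. a * x i) \<in> range (cwd n k \<alpha>)" by (metis rangeI)
qed

lemma code_dim_C: "code_dim (range (cwd n k \<alpha>)) = k"
proof -
  have "card {0::'a, 1} \<le> CARD('a)" by (intro card_mono) auto
  then have q2: "CARD('a) > 1" by simp
  show ?thesis unfolding code_dim_def
  proof (rule the_equality)
    show "card (range (cwd n k \<alpha>)) = CARD('a) ^ k" by (rule card_C)
    fix k' assume "card (range (cwd n k \<alpha>)) = CARD('a) ^ k'"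
    then have "CARD('a) ^ k' = CARD('a) ^ k" using card_C by simp
    then show "k' = k" using q2 by (simp add: power_inject_exp)
  qed
qed

lemma min_dist_C: "min_distance n (range (cwd n k \<alpha>)) = n - k + 1"
proof -
  define C where "C = range (cwd n k \<alpha>)"
  define \<pi> where "\<pi> = (\<lambda>c::nat \<Rightarrow> 'a. restrict c {..<k-1})"
  have q2: "CARD('a) > 1" by (rule card_gt1)
  have "\<not> inj_on \<pi> C"
  proof
    assume inj\<pi>: "inj_on \<pi> C"
    have "\<pi> ` C \<subseteq> PiE {..<k-1} (\<lambda>_. UNIV)" unfolding \<pi>_def image_subset_iff restrict_PiE_iff by simp
    moreover have "finite (PiE {..<k-1} (\<lambda>_. UNIV :: 'a set))" by (rule finite_PiE) auto
    ultimately have "card C \<le> card (PiE {..<k-1} (\<lambda>_. UNIV :: 'a set))"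
      using card_inj_on_le[OF inj\<pi>] by blast
    then have "CARD('a) ^ k \<le> CARD('a) ^ (k - 1)" using card_C C_def card_PiE_UNIV[where 'a='a] by simp
    moreover have "CARD('a) ^ (k - 1) < CARD('a) ^ k" using q2 k4
      by (intro power_strict_increasing) auto
    ultimately show False by simp
  qed
  then obtain c1 c2 where c: "c1 \<in> C" "c2 \<in> C" "c1 \<noteq> c2" "\<pi> c1 = \<pi> c2"
    unfolding inj_on_def by blast
  obtain u1 u2 where u: "c1 = cwd n k \<alpha> u1" "c2 = cwd n k \<alpha> u2" using c(1,2) C_def by auto
  define d where "d = cwd n k \<alpha> (\<lambda>r. u1 r - u2 r)"
  have d_eq: "d = (\<lambda>i. c1 i - c2 i)" using u by (simp add: d_def cwd_diff)
  have dC: "d \<in> C" using C_def d_def by simp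
  have dnz: "d \<noteq> (\<lambda>_. 0)"
  proof
    assume "d = (\<lambda>_. 0)"
    then have "c1 = c2" using d_eq by (metis (no_types, lifting) eq_iff_diff_eq_0 ext)
    then show False using c(3) by simp
  qed
  have dz: "d i = 0" if "i < k - 1" for i
  proof -
    have "restrict c1 {..<k-1} i = restrict c2 {..<k-1} i" using c(4) \<pi>_def by metis
    then show ?thesis using that d_eq by simp
  qed
  have "{i. i < n \<and> d i \<noteq> 0} \<subseteq> {k-1..<n}" using dz by (force simp: not_less)
  then have "card {i. i < n \<and> d i \<noteq> 0} \<le> card {k-1..<n}" by (intro card_mono) auto
  then have wle: "hamming_weight n d \<le> n - k + 1" unfolding hamming_weight_def using k4 nk by simp
  have wge: "hamming_weight n d \<ge> n - k + 1" using weight_ge dC dnz C_def by blast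
  have "Min (hamming_weight n ` (C - {\<lambda>_. 0})) = n - k + 1"
  proof (rule Min_eqI)
    show "finite (hamming_weight n ` (C - {\<lambda>_. 0}))" using finite_C C_def by simp
    show "y \<ge> n - k + 1" if "y \<in> hamming_weight n ` (C - {\<lambda>_. 0})" for y
      using that weight_ge C_def by auto
    show "n - k + 1 \<in> hamming_weight n ` (C - {\<lambda>_. 0})"
      using wle wge dC dnz by (intro image_eqI[of _ _ d]) auto
  qed
  then show ?thesis unfolding min_distance_def C_def .
qed

lemma MDS_C: "is_MDS n (range (cwd n k \<alpha>))"
  unfolding is_MDS_def using linear_C min_dist_C code_dim_C by simp

lemma word_inj_perm:
  fixes x y :: "nat \<Rightarrow> 'b::field"
  assumes \<sigma>: "\<sigma> permutes {..<n}" and t: "\<forall>i<n. t i \<noteq> 0"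
    and wx: "is_word n x" and wy: "is_word n y"
    and eq: "(\<lambda>i. if i < n then t i * x (\<sigma> i) else 0) = (\<lambda>i. if i < n then t i * y (\<sigma> i) else 0)"
  shows "x = y"
proof
  fix j
  show "x j = y j"
  proof (cases "j < n")
    case True
    define i where "i = inv_into UNIV \<sigma> j"
    have si: "\<sigma> i = j" using permutes_inverses(1)[OF \<sigma>] i_def by simp
    have "i < n" using permutes_in_image[OF \<sigma>, of i] si True by simp
    then have "t i * x j = t i * y j" using fun_cong[OF eq, of i] si by simp
    then show ?thesis using t \<open>i < n\<close> by simp
  next
    case False
    then show ?thesis using wx wy by (simp add: is_word_def)
  qed
qed

lemma rw_in_C:
  assumes "r < k"
  shows "(\<lambda>i. if i < n then \<alpha> i ^ ex k r else 0) \<in> range (cwd n k \<alpha>)"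
proof -
  have "(\<Sum>r'<k. (if r' = r then 1 else 0) * \<alpha> i ^ ex k r') = \<alpha> i ^ ex k r" for i
  proof -
    have "(\<Sum>r'<k. (if r' = r then 1 else 0) * \<alpha> i ^ ex k r') = (\<Sum>r'<k. if r' = r then \<alpha> i ^ ex k r' else 0)"
      by (rule sum.cong) auto
    also have "\<dots> = \<alpha> i ^ ex k r" using assms by simp
    finally show ?thesis .
  qed
  then have "cwd n k \<alpha> (\<lambda>r'. if r' = r then 1 else 0) = (\<lambda>i. if i < n then \<alpha> i ^ ex k r else 0)"
    by (auto simp: cwd_def)
  then show ?thesis by (metis rangeI)
qed

lemma nonGRS_C: "\<not> is_GRS_equiv n (range (cwd n k \<alpha>))"
proof
  define C where "C = range (cwd n k \<alpha>)"
  assume "is_GRS_equiv n (range (cwd n k \<alpha>))"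
  then obtain k' a w \<sigma> s where a: "inj_on a {..<n}" and w: "\<forall>i<n. w i \<noteq> 0"
    and \<sigma>: "\<sigma> permutes {..<n}" and s: "\<forall>i<n. s i \<noteq> 0"
    and D: "GRS n k' a w = (\<lambda>c. (\<lambda>i. if i < n then s i * c (\<sigma> i) else 0)) ` C"
    unfolding is_GRS_equiv_def code_equiv_def C_def by blast
  define \<phi> where "\<phi> = (\<lambda>c::nat \<Rightarrow> 'a. (\<lambda>i. if i < n then s i * c (\<sigma> i) else 0))"
  have q2: "CARD('a) > 1" by (rule card_gt1)
  have wordsC: "is_word n c" if "c \<in> C" for c
    using linear_C that C_def by (auto simp: linear_code_def)
  have inj\<phi>: "inj_on \<phi> C"
  proof
    fix x y assume "x \<in> C" "y \<in> C" "\<phi> x = \<phi> y"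
    then show "x = y" using word_inj_perm[OF \<sigma> s] wordsC unfolding \<phi>_def by blast
  qed
  have cardD: "card (GRS n k' a w) = CARD('a) ^ k"
    using D card_image[OF inj\<phi>] card_C C_def \<phi>_def by simp
  have finD: "finite (GRS n k' a w)" using D finite_C C_def by simp
  have kk: "k' \<le> k"
  proof (rule ccontr)
    assume "\<not> k' \<le> k"
    define Pm where "Pm = (\<lambda>c. (\<lambda>i. if i < n then w i * (\<Sum>j<k+1. c j * a i ^ j) else 0))"
    have "Pm ` PiE {..<k+1} (\<lambda>_. UNIV) \<subseteq> GRS n k' a w"
    proof
      fix x assume "x \<in> Pm ` PiE {..<k+1} (\<lambda>_. UNIV)"
      then obtain c where x: "x = Pm c" by auto
      define f where "f = (\<Sum>j<k+1. monom (c j) j)"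
      have "degree f \<le> k" unfolding f_def
        by (intro degree_sum_le) (auto intro: order_trans[OF degree_monom_le])
      then have df: "degree f \<le> k' - 1" using \<open>\<not> k' \<le> k\<close> by simp
      have pf: "poly f y = (\<Sum>j<k+1. c j * y ^ j)" for y
        unfolding f_def by (simp add: poly_sum poly_monom)
      have "x = (\<lambda>i. if i < n then w i * poly f (a i) else 0)"
        unfolding pf using x by (simp add: Pm_def)
      then show "x \<in> GRS n k' a w" unfolding GRS_def using df by blast
    qed
    then have "card (Pm ` PiE {..<k+1} (\<lambda>_. UNIV)) \<le> card (GRS n k' a w)"
      using finD by (intro card_mono) auto
    moreover have "card (Pm ` PiE {..<k+1} (\<lambda>_. UNIV)) = CARD('a) ^ (k + 1)"
      unfolding Pm_def by (rule card_poly_image[OF a _ w]) (use nk k4 in simp)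
    ultimately have "CARD('a) ^ (k + 1) \<le> CARD('a) ^ k" using cardD by simp
    moreover have "CARD('a) ^ k < CARD('a) ^ (k + 1)" using q2 by (intro power_strict_increasing) auto
    ultimately show False by simp
  qed
  define Y where "Y = {(\<lambda>i. if i < n then (w i)^2 * poly hh (a i) else 0) | hh. degree hh \<le> 2 * k - 2}"
  define Ym where "Ym = (\<lambda>c. (\<lambda>i. if i < n then (w i)^2 * (\<Sum>j<2*k-1. c j * a i ^ j) else 0))"
  have Ysub: "Y \<subseteq> Ym ` PiE {..<2*k-1} (\<lambda>_. UNIV)"
  proof
    fix y assume "y \<in> Y"
    then obtain hh where hh: "y = (\<lambda>i. if i < n then (w i)^2 * poly hh (a i) else 0)" "degree hh \<le> 2 * k - 2"
      unfolding Y_def by blast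
    have "degree hh < 2 * k - 1" using hh(2) k4 by linarith
    then have ph: "poly hh x = (\<Sum>j<2*k-1. restrict (coeff hh) {..<2*k-1} j * x ^ j)" for x
      using poly_sum_lessThan by simp
    have "y = Ym (restrict (coeff hh) {..<2*k-1})" using hh(1) unfolding Ym_def ph by simp
    moreover have "restrict (coeff hh) {..<2*k-1} \<in> PiE {..<2*k-1} (\<lambda>_. UNIV)" by simp
    ultimately show "y \<in> Ym ` PiE {..<2*k-1} (\<lambda>_. UNIV)" by blast
  qed
  have finPi: "finite (PiE {..<N} (\<lambda>_. UNIV :: 'a set))" for N :: nat by (rule finite_PiE) auto
  have finY: "finite Y" using Ysub finPi finite_surj by blast
  have cardY: "card Y \<le> CARD('a) ^ (2 * k - 1)"
  proof -
    have "card Y \<le> card (Ym ` PiE {..<2*k-1} (\<lambda>_. UNIV))" using Ysub finPi by (intro card_mono) auto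
    also have "\<dots> \<le> card (PiE {..<2*k-1} (\<lambda>_. UNIV :: 'a set))" by (rule card_image_le) (rule finPi)
    also have "\<dots> = CARD('a) ^ (2 * k - 1)" by (rule card_PiE_UNIV)
    finally show ?thesis .
  qed
  have Y0: "(\<lambda>_. 0) \<in> Y"
  proof -
    have "(\<lambda>_. 0::'a) = (\<lambda>i. if i < n then (w i)^2 * poly 0 (a i) else 0)" by auto
    then show ?thesis unfolding Y_def by (intro CollectI exI[of _ 0]) simp
  qed
  have Yadd: "(\<lambda>i. y1 i + y2 i) \<in> Y" if hy: "y1 \<in> Y" "y2 \<in> Y" for y1 y2
  proof -
    obtain h1 h2 where h: "y1 = (\<lambda>i. if i < n then (w i)^2 * poly h1 (a i) else 0)" "degree h1 \<le> 2 * k - 2"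
      "y2 = (\<lambda>i. if i < n then (w i)^2 * poly h2 (a i) else 0)" "degree h2 \<le> 2 * k - 2"
      using hy unfolding Y_def by blast
    have "(\<lambda>i. y1 i + y2 i) = (\<lambda>i. if i < n then (w i)^2 * poly (h1 + h2) (a i) else 0)"
      using h by (auto simp: algebra_simps)
    moreover have "degree (h1 + h2) \<le> 2 * k - 2" using h degree_add_le by blast
    ultimately show ?thesis unfolding Y_def by blast
  qed
  have Ysc: "(\<lambda>i. b * y i) \<in> Y" if hy: "y \<in> Y" for b y
  proof -
    obtain h where h: "y = (\<lambda>i. if i < n then (w i)^2 * poly h (a i) else 0)" "degree h \<le> 2 * k - 2"
      using hy unfolding Y_def by blast
    have "(\<lambda>i. b * y i) = (\<lambda>i. if i < n then (w i)^2 * poly (smult b h) (a i) else 0)"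
      using h by (auto simp: algebra_simps)
    moreover have "degree (smult b h) \<le> 2 * k - 2" using h by (simp add: order_trans[OF degree_smult_le])
    ultimately show ?thesis unfolding Y_def by blast
  qed
  define \<psi> where "\<psi> = (\<lambda>x::nat \<Rightarrow> 'a. (\<lambda>i. if i < n then (s i)^2 * x (\<sigma> i) else 0))"
  have \<sigma>n: "\<sigma> i < n" if "i < n" for i using permutes_in_image[OF \<sigma>, of i] that by simp
  have prodmem: "\<psi> (\<lambda>i. c i * c' i) \<in> Y" if hc: "c \<in> C" "c' \<in> C" for c c'
  proof -
    have "\<phi> c \<in> GRS n k' a w" "\<phi> c' \<in> GRS n k' a w" using D hc \<phi>_def by auto
    then obtain f g where fg: "\<phi> c = (\<lambda>i. if i < n then w i * poly f (a i) else 0)" "degree f \<le> k' - 1"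
      "\<phi> c' = (\<lambda>i. if i < n then w i * poly g (a i) else 0)" "degree g \<le> k' - 1"
      unfolding GRS_def by blast
    have "\<psi> (\<lambda>i. c i * c' i) = (\<lambda>i. \<phi> c i * \<phi> c' i)"
      by (auto simp: \<psi>_def \<phi>_def power2_eq_square algebra_simps)
    also have "\<dots> = (\<lambda>i. if i < n then (w i)^2 * poly (f * g) (a i) else 0)"
      using fg by (auto simp: power2_eq_square algebra_simps)
    finally have e: "\<psi> (\<lambda>i. c i * c' i) = (\<lambda>i. if i < n then (w i)^2 * poly (f * g) (a i) else 0)" .
    have "degree (f * g) \<le> degree f + degree g" by (rule degree_mult_le)
    also have "\<dots> \<le> 2 * k - 2" using fg kk by linarith
    finally show ?thesis using e unfolding Y_def by blast
  qed
  define Z where "Z = {x. is_word n x \<and> \<psi> x \<in> Y}"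
  have "\<psi> (\<lambda>_. 0) = (\<lambda>_. 0)" by (auto simp: \<psi>_def)
  then have Z0: "(\<lambda>_. 0) \<in> Z" using Y0 by (simp add: Z_def is_word_def)
  have Zadd: "(\<lambda>i. x i + y i) \<in> Z" if "x \<in> Z" "y \<in> Z" for x y
  proof -
    have "\<psi> (\<lambda>i. x i + y i) = (\<lambda>i. \<psi> x i + \<psi> y i)" by (auto simp: \<psi>_def algebra_simps)
    then show ?thesis using that Yadd by (auto simp: Z_def is_word_def)
  qed
  have Zsc: "(\<lambda>i. b * x i) \<in> Z" if "x \<in> Z" for b x
  proof -
    have "\<psi> (\<lambda>i. b * x i) = (\<lambda>i. b * \<psi> x i)" by (auto simp: \<psi>_def algebra_simps)
    then show ?thesis using that Ysc by (auto simp: Z_def is_word_def)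
  qed
  have s2: "\<forall>i<n. (s i)^2 \<noteq> 0" using s by simp
  have inj\<psi>: "inj_on \<psi> Z"
  proof
    fix x y assume "x \<in> Z" "y \<in> Z" "\<psi> x = \<psi> y"
    then show "x = y" using word_inj_perm[OF \<sigma> s2] unfolding Z_def \<psi>_def by blast
  qed
  have imZ: "\<psi> ` Z \<subseteq> Y" unfolding Z_def by blast
  then have "finite (\<psi> ` Z)" using finY by (rule finite_subset)
  then have finZ: "finite Z" using inj\<psi> by (rule finite_imageD)
  have cardZ: "card Z \<le> card Y" by (rule card_inj_on_le[OF inj\<psi> imZ finY])
  define rw where "rw = (\<lambda>e. (\<lambda>i. if i < n then \<alpha> i ^ e else (0::'a)))"
  have rwC: "rw (ex k r) \<in> C" if "r < k" for r using rw_in_C[OF that] rw_def C_def by simp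
  have rwZ: "rw e \<in> Z" if "e < 2 * k" for e
  proof -
    obtain r1 r2 where r: "r1 < k" "r2 < k" "ex k r1 + ex k r2 = e"
    proof (cases "e \<le> 2 * k - 4")
      case True
      define e1 where "e1 = min e (k - 2)"
      have h1: "e1 \<le> k - 2" "e - e1 \<le> k - 2" "e1 + (e - e1) = e" using True k4 unfolding e1_def by auto
      then have "ex k e1 = e1" "ex k (e - e1) = e - e1" by (auto simp: ex_def)
      then show ?thesis
        by (intro that[of e1 "e - e1"]) (use h1 k4 in linarith)+
    next
      case False
      show ?thesis
        by (rule that[of "k - 1" "e - (k + 1)"]) (use False k4 \<open>e < 2 * k\<close> in \<open>auto simp: ex_def\<close>)
    qed
    have "rw e = (\<lambda>i. rw (ex k r1) i * rw (ex k r2) i)"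
      using r(3) by (auto simp: rw_def power_add)
    moreover have "is_word n (rw e)" by (simp add: rw_def is_word_def)
    ultimately show ?thesis using prodmem[OF rwC[OF r(1)] rwC[OF r(2)]] by (simp add: Z_def)
  qed
  define Lc where "Lc = (\<lambda>c. (\<lambda>i. if i < n then 1 * (\<Sum>j<2*k. c j * \<alpha> i ^ j) else (0::'a)))"
  have LcF: "(\<lambda>i. if i < n then (\<Sum>j\<in>F. c j * \<alpha> i ^ j) else 0) \<in> Z" if "F \<subseteq> {..<2*k}" for F c
  proof -
    have "finite F" using that finite_subset by blast
    then show ?thesis using that
    proof (induction F rule: finite_induct)
      case empty
      have "(\<lambda>i. if i < n then (\<Sum>j\<in>{}. c j * \<alpha> i ^ j) else 0) = (\<lambda>_. 0::'a)" by auto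
      then show ?case using Z0 by simp
    next
      case (insert e F)
      have "(\<lambda>i. if i < n then (\<Sum>j\<in>insert e F. c j * \<alpha> i ^ j) else 0)
          = (\<lambda>i. (if i < n then (\<Sum>j\<in>F. c j * \<alpha> i ^ j) else 0) + c e * rw e i)"
        using insert.hyps by (auto simp: rw_def)
      moreover have "(\<lambda>i. c e * rw e i) \<in> Z" using Zsc rwZ insert.prems by auto
      moreover have "(\<lambda>i. if i < n then (\<Sum>j\<in>F. c j * \<alpha> i ^ j) else 0) \<in> Z"
        using insert.IH insert.prems by auto
      ultimately show ?case using Zadd by simp
    qed
  qed
  have "Lc ` PiE {..<2*k} (\<lambda>_. UNIV) \<subseteq> Z"
    using LcF[of "{..<2*k}"] unfolding Lc_def by (auto cong: if_cong)
  then have "card (Lc ` PiE {..<2*k} (\<lambda>_. UNIV)) \<le> card Z" using finZ by (intro card_mono)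
  moreover have "card (Lc ` PiE {..<2*k} (\<lambda>_. UNIV)) = CARD('a) ^ (2 * k)"
    unfolding Lc_def by (rule card_poly_image[OF inj _, of "2 * k" "\<lambda>_. 1"]) (use nk k4 in simp_all)
  ultimately have "CARD('a) ^ (2 * k) \<le> CARD('a) ^ (2 * k - 1)" using cardZ cardY by linarith
  moreover have "CARD('a) ^ (2 * k - 1) < CARD('a) ^ (2 * k)" using q2 k4 by (intro power_strict_increasing) auto
  ultimately show False by simp
qed

end

theorem theorem4p7:
  fixes p m n k t h :: nat and \<gamma> :: "'a::{field,finite}" and \<alpha> :: "nat \<Rightarrow> 'a"
  assumes "prime p" and "CARD('a) = p ^ m"
    and "generates_field \<gamma>"
    and "t = (m - 1) div 2"
    and "4 \<le> k" and "2 * k \<le> n - 1" and "n \<le> p ^ t"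
    and "h = k + 1"
    and "inj_on \<alpha> {..<n}"
    and "\<forall>i<n. \<exists>a :: nat \<Rightarrow> 'a. (\<forall>j<t. a j \<in> prime_subfield) \<and>
            \<alpha> i = \<gamma> ^ t + (\<Sum>j<t. a j * \<gamma> ^ j)"
    and "\<not> p dvd (k * (k + 1) div 2)"
  shows "non_GRS_MDS n
           (gen_code k n (\<lambda>r i. \<alpha> i ^ (if r \<le> k - 2 then r else h)))"
proof -
  note pp = assms(1) and card = assms(2) and gen = assms(3) and tdef = assms(4)
    and k4 = assms(5) and nk = assms(6) and hdef = assms(8) and inj = assms(9)
    and h\<alpha> = assms(10) and ndvd = assms(11)
  have ch: "CHAR('a) = p" and m1: "m \<ge> 1" using char_is_p[OF pp card] by auto
  have rc: "(coeff ([:0,0,1:] * (\<Prod>i\<in>S. [:-\<alpha> i,1:])) (k + 1)) ^ 2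
      \<noteq> coeff ([:0,0,1:] * (\<Prod>i\<in>S. [:-\<alpha> i,1:])) k" if "S \<subseteq> {..<n}" "card S = k" for S
    by (rule r_nonzero[OF ch pp card gen tdef m1 h\<alpha> ndvd that])
  have Ceq: "gen_code k n (\<lambda>r i. \<alpha> i ^ (if r \<le> k - 2 then r else h)) = range (cwd n k \<alpha>)"
    unfolding gen_code_def cwd_def ex_def hdef by auto
  show ?thesis unfolding non_GRS_MDS_def Ceq
    using MDS_C[OF k4 nk inj rc] nonGRS_C[OF k4 nk inj rc] by blast
qed

end
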